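(* Let $x>0$, $y>0$. (1) If $x\ge1$ and $y\ge1$, then $\Gamma(x,y)\ge\max\Big(\frac{\Gamma(x)}{y^{x}},\frac{\Gamma(y)}{x^{y}}\Big)$. (2) If $x\ge1$ and $0<y\le1$, then $\frac{\Gamma(y)}{x^{y}}\le\Gamma(x,y)\le\frac{\Gamma(x)}{y^{x}}$. (3) If $0<x\le1$ and $y\ge1$, then $\frac{\Gamma(x)}{y^{x}}\le\Gamma(x,y)\le\frac{\Gamma(y)}{x^{y}}$. (4) If $0<x\le1$ and $0<y\le1$, then $\Gamma(x,y)\le\min\Big(\frac{\Gamma(x)}{y^{x}},\frac{\Gamma(y)}{x^{y}}\Big)$.
   Context: For $x>0,y>0$ the Bigamma function is the (convergent) improper integral $\Gamma(x,y):=\int_0^1(-\ln t)^{x-1}\big(-\ln(1-t)\big)^{y-1}\,dt$. $\Gamma(x)$ (one argument) denotes Euler's gamma function. *)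

theory Defs
  imports "HOL-Analysis.Analysis"
begin

text \<open>The integrand is nonnegative,
  so the improper Riemann integral equals the Lebesgue integral over the open interval.\<close>
definition Bigamma :: "real \<Rightarrow> real \<Rightarrow> real" where
  "Bigamma x y = (LBINT t:{0<..<1}. (- ln t) powr (x - 1) * (- ln (1 - t)) powr (y - 1))"

end

theory Submission
  imports Defs
begin

lemma Gint:
  fixes a b :: real assumes a: "a > 0" and b: "b > 0"
  shows "(\<lambda>t. (- ln t) powr (a - 1) * t powr (b - 1)) absolutely_integrable_on {0<..<1} \<and>
         integral {0<..<1} (\<lambda>t. (- ln t) powr (a - 1) * t powr (b - 1)) = Gamma a / b powr a"
proof -
  define S :: "real set" where "S = {0<..}"
  define g where "g = (\<lambda>u::real. exp (- u / b))"
  define g' where "g' = (\<lambda>u::real. - exp (- u / b) / b)"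
  define f where "f = (\<lambda>t::real. (- ln t) powr (a - 1) * t powr (b - 1))"
  have Sl: "S \<in> sets lebesgue" unfolding S_def by simp
  have der: "(g has_field_derivative g' u) (at u within S)" for u
    unfolding g_def g'_def using b
    by (auto intro!: derivative_eq_intros simp: field_simps)
  have inj: "inj_on g S" unfolding g_def inj_on_def using b by auto
  have img: "g ` S = {0<..<1}"
  proof
    show "g ` S \<subseteq> {0<..<1}" unfolding g_def S_def using b by auto
    show "{0<..<1} \<subseteq> g ` S"
    proof
      fix t :: real assume t: "t \<in> {0<..<1}"
      have "- b * ln t \<in> S" using t b unfolding S_def by (auto simp: mult_pos_neg)
      moreover have "g (- b * ln t) = t" unfolding g_def using t b by simp
      ultimately show "t \<in> g ` S" by (metis image_eqI)
    qed
  qed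
  have eq: "\<bar>g' u\<bar> * f (g u) = u powr (a - 1) / exp u / b powr a" if "u \<in> S" for u
  proof -
    have u: "u > 0" using that S_def by auto
    have "\<bar>g' u\<bar> = exp (- u / b) / b" unfolding g'_def using b by simp
    moreover have "f (g u) = (u / b) powr (a - 1) * exp (- u / b * (b - 1))"
      unfolding f_def g_def by (simp add: powr_def)
    moreover have "(u / b) powr (a - 1) = u powr (a - 1) / b powr (a - 1)"
      using u b by (simp add: powr_divide)
    moreover have "exp (- u / b) * exp (- u / b * (b - 1)) = exp (- u)"
      using b by (simp add: exp_add[symmetric] field_simps)
    moreover have "b * b powr (a - 1) = b powr a"
      using b by (simp add: powr_diff)
    ultimately have "\<bar>g' u\<bar> * f (g u) = u powr (a - 1) * (exp (- u / b) * exp (- u / b * (b - 1))) / (b * b powr (a - 1))"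
      by (simp add: field_simps)
    also have "\<dots> = u powr (a - 1) * exp (- u) / b powr a"
      using \<open>exp (- u / b) * exp (- u / b * (b - 1)) = exp (- u)\<close> \<open>b * b powr (a - 1) = b powr a\<close> by simp
    finally show ?thesis by (simp add: exp_minus field_simps)
  qed
  have G0: "((\<lambda>u. u powr (a - 1) / exp u) has_integral Gamma a) S"
  proof -
    have "((\<lambda>u. u powr (a - 1) / exp u) has_integral Gamma a) {0..}" by (rule Gamma_integral_real[OF a])
    then show ?thesis unfolding S_def
      by (rule has_integral_spike_set_eq[THEN iffD1, rotated 2])
         (auto intro: negligible_subset[OF negligible_sing[of 0]])
  qed
  have G1': "((\<lambda>u. u powr (a - 1) / exp u / b powr a) has_integral Gamma a / b powr a) S"
    using has_integral_cmul[OF G0, of "1 / b powr a"] by (simp add: mult.commute)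
  have G1: "((\<lambda>u. \<bar>g' u\<bar> * f (g u)) has_integral Gamma a / b powr a) S"
    by (rule has_integral_spike[OF negligible_empty _ G1']) (simp add: eq)
  have nn: "0 \<le> \<bar>g' u\<bar> * f (g u)" if "u \<in> S" for u
    using eq[OF that] that unfolding S_def by auto
  have "(\<lambda>u. \<bar>g' u\<bar> * f (g u)) absolutely_integrable_on S"
    using G1 nn by (subst absolutely_integrable_on_iff_nonneg) (auto simp: has_integral_integrable)
  then have "f absolutely_integrable_on (g ` S) \<and> integral (g ` S) f = Gamma a / b powr a"
    using has_absolute_integral_change_of_variables_1'[OF Sl der inj, of f "Gamma a / b powr a"] G1
    by (auto simp: integral_unique)
  then show ?thesis unfolding img f_def .
qed

lemma Kint:
  fixes a b :: real assumes a: "a > 0" and b: "b > 0"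
  shows "(\<lambda>t. (- ln (1 - t)) powr (a - 1) * (1 - t) powr (b - 1)) absolutely_integrable_on {0<..<1} \<and>
         integral {0<..<1} (\<lambda>t. (- ln (1 - t)) powr (a - 1) * (1 - t) powr (b - 1)) = Gamma a / b powr a"
proof -
  define S :: "real set" where "S = {0<..<1}"
  define f where "f = (\<lambda>t::real. (- ln t) powr (a - 1) * t powr (b - 1))"
  have Sl: "S \<in> sets lebesgue" unfolding S_def by simp
  have der: "((\<lambda>t. 1 - t) has_field_derivative (-1)) (at u within S)" for u
    by (auto intro!: derivative_eq_intros)
  have inj: "inj_on (\<lambda>t::real. 1 - t) S" unfolding inj_on_def by auto
  have img: "(\<lambda>t::real. 1 - t) ` S = {0<..<1}"
  proof
    show "(\<lambda>t::real. 1 - t) ` S \<subseteq> {0<..<1}" unfolding S_def by auto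
    show "{0<..<1} \<subseteq> (\<lambda>t::real. 1 - t) ` S"
    proof
      fix t :: real assume t: "t \<in> {0<..<1}"
      have "1 - t \<in> S" using t unfolding S_def by auto
      then have "1 - (1 - t) \<in> (\<lambda>t. 1 - t) ` S" by (rule imageI)
      then show "t \<in> (\<lambda>t. 1 - t) ` S" by simp
    qed
  qed
  have "f absolutely_integrable_on ((\<lambda>t. 1 - t) ` S) \<and> integral ((\<lambda>t. 1 - t) ` S) f = Gamma a / b powr a"
    unfolding img f_def using Gint[OF a b] by simp
  then have "(\<lambda>t. \<bar>-1\<bar> * f (1 - t)) absolutely_integrable_on S \<and> integral S (\<lambda>t. \<bar>-1\<bar> * f (1 - t)) = Gamma a / b powr a"
    using has_absolute_integral_change_of_variables_1'[OF Sl der inj, of f "Gamma a / b powr a"] by blast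
  then show ?thesis unfolding S_def f_def by simp
qed

lemma to_lborel:
  fixes x y :: real
  defines "F \<equiv> (\<lambda>t::real. (- ln t) powr (x - 1) * (- ln (1 - t)) powr (y - 1))"
  assumes "F absolutely_integrable_on {0<..<1}"
  shows "(LBINT t:{0<..<1}. F t) = integral {0<..<1} F"
proof -
  have m: "(\<lambda>t. indicator {0<..<1} t *\<^sub>R F t) \<in> borel_measurable lborel"
    unfolding F_def by measurable
  have "set_integrable lborel {0<..<1} F"
    using assms(2) m unfolding absolutely_integrable_on_def set_integrable_def
    by (simp add: integrable_completion)
  then show ?thesis by (rule set_borel_integral_eq_integral(2))
qed


theorem mainTheorem6:
  fixes x y :: real
  assumes "x > 0" and "y > 0"
  shows "(x \<ge> 1 \<and> y \<ge> 1 \<longrightarrow>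
            Bigamma x y \<ge> max (Gamma x / y powr x) (Gamma y / x powr y))
       \<and> (x \<ge> 1 \<and> y \<le> 1 \<longrightarrow>
            Gamma y / x powr y \<le> Bigamma x y \<and> Bigamma x y \<le> Gamma x / y powr x)
       \<and> (x \<le> 1 \<and> y \<ge> 1 \<longrightarrow>
            Gamma x / y powr x \<le> Bigamma x y \<and> Bigamma x y \<le> Gamma y / x powr y)
       \<and> (x \<le> 1 \<and> y \<le> 1 \<longrightarrow>
            Bigamma x y \<le> min (Gamma x / y powr x) (Gamma y / x powr y))"
proof -
  define I :: "real set" where "I = {0<..<1}"
  define F where "F = (\<lambda>t::real. (- ln t) powr (x - 1) * (- ln (1 - t)) powr (y - 1))"
  define G where "G = (\<lambda>t::real. (- ln t) powr (x - 1) * t powr (y - 1))"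
  define K where "K = (\<lambda>t::real. (- ln (1 - t)) powr (y - 1) * (1 - t) powr (x - 1))"
  define G1 where "G1 = (\<lambda>t::real. (- ln t) powr (x - 1) * t powr (1 - 1))"
  define K1 where "K1 = (\<lambda>t::real. (- ln (1 - t)) powr (y - 1) * (1 - t) powr (1 - 1))"
  have Gi: "G absolutely_integrable_on I" "integral I G = Gamma x / y powr x"
    using Gint[OF assms] unfolding G_def I_def by auto
  have Ki: "K absolutely_integrable_on I" "integral I K = Gamma y / x powr y"
    using Kint[OF assms(2,1)] unfolding K_def I_def by auto
  have G1i: "G1 absolutely_integrable_on I"
    using Gint[OF assms(1) zero_less_one] unfolding G1_def I_def by auto
  have K1i: "K1 absolutely_integrable_on I"
    using Kint[OF assms(2) zero_less_one] unfolding K1_def I_def by auto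
  have pos: "0 < - ln t" "0 < - ln (1 - t)" "t \<le> - ln (1 - t)" "1 - t \<le> - ln t" if "t \<in> I" for t
  proof -
    from that have t: "0 < t" "t < 1" unfolding I_def by auto
    show "0 < - ln t" "0 < - ln (1 - t)" using t by auto
    have "ln (1 - t) \<le> (1 - t) - 1" using t by (intro ln_le_minus_one) auto
    then show "t \<le> - ln (1 - t)" by simp
    have "ln t \<le> t - 1" using t by (intro ln_le_minus_one) auto
    then show "1 - t \<le> - ln t" by simp
  qed
  have FG1: "G t \<le> F t" if "t \<in> I" "y \<ge> 1" for t
  proof -
    have "t powr (y - 1) \<le> (- ln (1 - t)) powr (y - 1)"
      using pos[OF that(1)] that(2) \<open>t \<in> I\<close> unfolding I_def by (intro powr_mono2) auto
    then show ?thesis unfolding G_def F_def by (intro mult_left_mono) auto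
  qed
  have FG2: "F t \<le> G t" if "t \<in> I" "y \<le> 1" for t
  proof -
    have "(- ln (1 - t)) powr (y - 1) \<le> t powr (y - 1)"
      using pos[OF that(1)] that(2) \<open>t \<in> I\<close> unfolding I_def by (intro powr_mono2') auto
    then show ?thesis unfolding G_def F_def by (intro mult_left_mono) auto
  qed
  have FK1: "K t \<le> F t" if "t \<in> I" "x \<ge> 1" for t
  proof -
    have "(1 - t) powr (x - 1) \<le> (- ln t) powr (x - 1)"
      using pos[OF that(1)] that(2) \<open>t \<in> I\<close> unfolding I_def by (intro powr_mono2) auto
    then show ?thesis unfolding K_def F_def by (subst mult.commute) (intro mult_left_mono, auto)
  qed
  have FK2: "F t \<le> K t" if "t \<in> I" "x \<le> 1" for t
  proof -
    have "(- ln t) powr (x - 1) \<le> (1 - t) powr (x - 1)"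
      using pos[OF that(1)] that(2) \<open>t \<in> I\<close> unfolding I_def by (intro powr_mono2') auto
    then show ?thesis unfolding K_def F_def by (subst mult.commute) (intro mult_left_mono, auto)
  qed
  have FGK: "F t \<le> G1 t + K1 t" if "t \<in> I" "x \<ge> 1" "y \<ge> 1" for t
  proof -
    from that have t: "0 < t" "t < 1" unfolding I_def by auto
    have nG: "0 \<le> G1 t" "0 \<le> K1 t" unfolding G1_def K1_def by auto
    have G1e: "G1 t = (- ln t) powr (x - 1)" unfolding G1_def using t by simp
    have K1e: "K1 t = (- ln (1 - t)) powr (y - 1)" unfolding K1_def using t by simp
    show ?thesis
    proof (cases "t \<le> 1/2")
      case True
      have "ln (1/2) \<le> ln (1 - t)" using True t by (subst ln_le_cancel_iff) auto
      then have "- ln (1 - t) \<le> 1" using ln_2_less_1 by (simp add: ln_div)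
      then have "(- ln (1 - t)) powr (y - 1) \<le> 1 powr (y - 1)"
        using pos[OF that(1)] that by (intro powr_mono2) auto
      then have "F t \<le> (- ln t) powr (x - 1) * 1" unfolding F_def by (intro mult_left_mono) auto
      then show ?thesis using nG G1e by simp
    next
      case False
      have "ln (1/2) \<le> ln t" using False t by (subst ln_le_cancel_iff) auto
      then have "- ln t \<le> 1" using ln_2_less_1 by (simp add: ln_div)
      then have "(- ln t) powr (x - 1) \<le> 1 powr (x - 1)"
        using pos[OF that(1)] that by (intro powr_mono2) auto
      then have "F t \<le> 1 * (- ln (1 - t)) powr (y - 1)" unfolding F_def by (intro mult_right_mono) auto
      then show ?thesis using nG K1e by simp
    qed
  qed
  have Fnn: "0 \<le> F t" for t unfolding F_def by auto
  have Il: "I \<in> sets lebesgue" unfolding I_def by simp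
  have cont: "continuous_on I F"
    unfolding F_def using pos by (intro continuous_intros) (auto simp: I_def)
  have meas: "F \<in> borel_measurable (lebesgue_on I)"
    by (rule continuous_imp_measurable_on_sets_lebesgue[OF cont Il])
  have integ: "f integrable_on I" if "f absolutely_integrable_on I" for f :: "real \<Rightarrow> real"
    using that unfolding absolutely_integrable_on_def by blast
  have Fi: "F absolutely_integrable_on I"
  proof (cases "y \<le> 1")
    case True
    show ?thesis by (rule measurable_bounded_by_integrable_imp_absolutely_integrable[OF meas Il integ[OF Gi(1)]])
                    (use FG2 True Fnn in auto)
  next
    case y: False
    show ?thesis
    proof (cases "x \<le> 1")
      case True
      show ?thesis by (rule measurable_bounded_by_integrable_imp_absolutely_integrable[OF meas Il integ[OF Ki(1)]])
                      (use FK2 True Fnn in auto)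
    next
      case False
      show ?thesis
        by (rule measurable_bounded_by_integrable_imp_absolutely_integrable[OF meas Il
                 integrable_add[OF integ[OF G1i] integ[OF K1i]]])
           (use FGK False y Fnn in auto)
    qed
  qed
  have B: "Bigamma x y = integral I F"
    unfolding Bigamma_def I_def F_def using to_lborel[of x y] Fi unfolding I_def F_def by simp
  have Fint: "F integrable_on I" by (rule integ[OF Fi])
  have Gin: "G integrable_on I" by (rule integ[OF Gi(1)])
  have Kin: "K integrable_on I" by (rule integ[OF Ki(1)])
  have c1: "Gamma x / y powr x \<le> Bigamma x y" if "y \<ge> 1"
    unfolding B Gi(2)[symmetric] by (rule integral_le[OF Gin Fint]) (use FG1 that in auto)
  have c2: "Bigamma x y \<le> Gamma x / y powr x" if "y \<le> 1"
    unfolding B Gi(2)[symmetric] by (rule integral_le[OF Fint Gin]) (use FG2 that in auto)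
  have c3: "Gamma y / x powr y \<le> Bigamma x y" if "x \<ge> 1"
    unfolding B Ki(2)[symmetric] by (rule integral_le[OF Kin Fint]) (use FK1 that in auto)
  have c4: "Bigamma x y \<le> Gamma y / x powr y" if "x \<le> 1"
    unfolding B Ki(2)[symmetric] by (rule integral_le[OF Fint Kin]) (use FK2 that in auto)
  show ?thesis using c1 c2 c3 c4 by auto
qed

end
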